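(* Let $m_1\in\mathbb N$, $\theta=(\theta_1,\dots,\theta_{m_1})$ with $\theta_i>0$, real numbers $d_1,\dots,d_{m_1}$, and a $C^1$ function $u=(u_1,\dots,u_{m_1})$ of $x\in\mathbb{R}^n$ with values in $[0,\infty)^{m_1}$. Then for every integer $p\ge2$, $$\sum_{|\beta|=p-1}\binom{p}{\beta}\theta^{\beta^2}\sum_{i=1}^{m_1}\theta_i^{2\beta_i+1}d_i\nabla u_i\cdot\nabla u^\beta=\sum_{|\beta|=p-2}\binom p\beta\theta^{\beta^2}u^\beta\sum_{l=1}^n\sum_{i,j=1}^{m_1}a_{i,j}\frac{\partial u_i}{\partial x_l}\frac{\partial u_j}{\partial x_l},$$ where, for each $\beta$, $(a_{i,j})$ is the symmetric $m_1\times m_1$ matrix with $a_{i,j}=\frac{d_i+d_j}{2}\theta_i^{2\beta_i+1}\theta_j^{2\beta_j+1}$ for $i\ne j$ and $a_{i,i}=d_i\theta_i^{4\beta_i+4}$.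
   Context: Sums are over $\beta\in\mathbb Z_+^{m_1}$ ($m_1$-tuples of nonnegative integers); $|\beta|=\sum_i\beta_i$, $\beta^2=(\beta_1^2,\dots,\beta_{m_1}^2)$, $z^\alpha=\prod_iz_i^{\alpha_i}$ with $0^0=1$, and $\binom{p}{\beta}=\frac{p!}{\beta_1!\cdots\beta_{m_1}!}$ (also used when $|\beta|<p$). *)

theory Defs
  imports "HOL-Analysis.Analysis"
begin

text \<open>Multi-indices \<beta> \<in> Z_+^m, encoded as functions nat => nat vanishing from m on;
  components are indexed by 0..<m.\<close>
definition multi_idx :: "nat \<Rightarrow> nat \<Rightarrow> (nat \<Rightarrow> nat) set" where
  "multi_idx m k = {\<beta>. (\<forall>j\<ge>m. \<beta> j = 0) \<and> (\<Sum>j<m. \<beta> j) = k}"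

text \<open>Multinomial coefficient p!/(\<beta>_1! ... \<beta>_m!) (also used when |\<beta>| < p).\<close>
definition multinom :: "nat \<Rightarrow> nat \<Rightarrow> (nat \<Rightarrow> nat) \<Rightarrow> real" where
  "multinom m p \<beta> = fact p / (\<Prod>j<m. fact (\<beta> j))"

definition mpow :: "nat \<Rightarrow> (nat \<Rightarrow> real) \<Rightarrow> (nat \<Rightarrow> nat) \<Rightarrow> real" where
  "mpow m z \<alpha> = (\<Prod>j<m. z j ^ \<alpha> j)"

definition pderiv_at :: "'n::finite \<Rightarrow> (real^'n \<Rightarrow> real) \<Rightarrow> real^'n \<Rightarrow> real" where
  "pderiv_at l f x = frechet_derivative f (at x) (axis l 1)"

definition grad_dot :: "(real^'n::finite \<Rightarrow> real) \<Rightarrow> (real^'n \<Rightarrow> real) \<Rightarrow> real^'n \<Rightarrow> real" where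
  "grad_dot f g x = (\<Sum>l\<in>UNIV. pderiv_at l f x * pderiv_at l g x)"

definition amat :: "(nat \<Rightarrow> real) \<Rightarrow> (nat \<Rightarrow> real) \<Rightarrow> (nat \<Rightarrow> nat) \<Rightarrow> nat \<Rightarrow> nat \<Rightarrow> real" where
  "amat \<theta> d \<beta> i j = (if i = j then d i * \<theta> i ^ (4 * \<beta> i + 4)
     else (d i + d j) / 2 * \<theta> i ^ (2 * \<beta> i + 1) * \<theta> j ^ (2 * \<beta> j + 1))"

end

theory Submission imports Defs begin

lemma finite_multi_idx: "finite (multi_idx m k)"
proof -
  have "multi_idx m k \<subseteq> (\<lambda>g j. if j < m then g j else 0) ` (PiE {..<m} (\<lambda>_. {..k}))"
  proof
    fix \<beta> assume b: "\<beta> \<in> multi_idx m k"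
    hence z: "\<forall>j\<ge>m. \<beta> j = 0" and s: "(\<Sum>j<m. \<beta> j) = k" by (auto simp: multi_idx_def)
    have le: "\<beta> j \<le> k" if "j < m" for j
      using member_le_sum[of j "{..<m}" \<beta>] that s by auto
    show "\<beta> \<in> (\<lambda>g j. if j < m then g j else 0) ` (PiE {..<m} (\<lambda>_. {..k}))"
    proof (rule image_eqI[where x="restrict \<beta> {..<m}"])
      show "\<beta> = (\<lambda>j. if j < m then restrict \<beta> {..<m} j else 0)"
        using z by (auto simp: fun_eq_iff)
      show "restrict \<beta> {..<m} \<in> {..<m} \<rightarrow>\<^sub>E {..k}" using le by auto
    qed
  qed
  thus ?thesis by (rule finite_subset) (auto intro: finite_PiE)
qed

lemma deriv_mpow:
  assumes "\<And>i. i < m \<Longrightarrow> u i differentiable (at x)"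
  shows "pderiv_at l (\<lambda>y. mpow m (\<lambda>j. u j y) \<beta>) x =
    (\<Sum>j<m. real (\<beta> j) * mpow m (\<lambda>j. u j x) (\<beta>(j := \<beta> j - 1)) * pderiv_at l (u j) x)"
proof -
  have D: "(u i has_derivative frechet_derivative (u i) (at x)) (at x)" if "i < m" for i
    using assms[OF that] frechet_derivative_works by blast
  have "((\<lambda>y. \<Prod>j\<in>{..<m}. u j y ^ \<beta> j) has_derivative
     (\<lambda>h. \<Sum>i\<in>{..<m}. (of_nat (\<beta> i) * frechet_derivative (u i) (at x) h * u i x ^ (\<beta> i - 1))
        * (\<Prod>k\<in>{..<m} - {i}. u k x ^ \<beta> k))) (at x)"
    by (rule has_derivative_prod, rule has_derivative_power, rule D) auto
  hence "frechet_derivative (\<lambda>y. mpow m (\<lambda>j. u j y) \<beta>) (at x) = 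
     (\<lambda>h. \<Sum>i\<in>{..<m}. (of_nat (\<beta> i) * frechet_derivative (u i) (at x) h * u i x ^ (\<beta> i - 1))
        * (\<Prod>k\<in>{..<m} - {i}. u k x ^ \<beta> k))"
    unfolding mpow_def by (rule frechet_derivative_at[symmetric])
  hence "pderiv_at l (\<lambda>y. mpow m (\<lambda>j. u j y) \<beta>) x = (\<Sum>i\<in>{..<m}. (of_nat (\<beta> i) * pderiv_at l (u i) x * u i x ^ (\<beta> i - 1))
        * (\<Prod>k\<in>{..<m} - {i}. u k x ^ \<beta> k))"
    unfolding pderiv_at_def by simp
  also have "\<dots> = (\<Sum>j<m. real (\<beta> j) * mpow m (\<lambda>j. u j x) (\<beta>(j := \<beta> j - 1)) * pderiv_at l (u j) x)"
  proof (rule sum.cong[OF refl])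
    fix j assume j: "j \<in> {..<m}"
    have "mpow m (\<lambda>j. u j x) (\<beta>(j := \<beta> j - 1)) = u j x ^ (\<beta> j - 1) * (\<Prod>k\<in>{..<m} - {j}. u k x ^ \<beta> k)"
    proof -
      have "mpow m (\<lambda>j. u j x) (\<beta>(j := \<beta> j - 1)) = (\<lambda>k. u k x ^ (\<beta>(j := \<beta> j - 1)) k) j * (\<Prod>k\<in>{..<m} - {j}. (\<lambda>k. u k x ^ (\<beta>(j := \<beta> j - 1)) k) k)"
        unfolding mpow_def using j by (intro prod.remove) auto
      also have "(\<Prod>k\<in>{..<m} - {j}. (\<lambda>k. u k x ^ (\<beta>(j := \<beta> j - 1)) k) k) = (\<Prod>k\<in>{..<m} - {j}. u k x ^ \<beta> k)"
        by (rule prod.cong) auto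
      also have "(\<lambda>k. u k x ^ (\<beta>(j := \<beta> j - 1)) k) j = u j x ^ (\<beta> j - 1)" by simp
      finally show ?thesis by (simp only: mult.commute)
    qed
    thus "(of_nat (\<beta> j) * pderiv_at l (u j) x * u j x ^ (\<beta> j - 1)) * (\<Prod>k\<in>{..<m} - {j}. u k x ^ \<beta> k)
       = real (\<beta> j) * mpow m (\<lambda>j. u j x) (\<beta>(j := \<beta> j - 1)) * pderiv_at l (u j) x" by simp
  qed
  finally show ?thesis .
qed

lemma sum_upd_nat:
  fixes \<beta> :: "nat \<Rightarrow> nat"
  assumes j: "j < m"
  shows "(\<Sum>i<m. (\<beta>(j := v)) i) + \<beta> j = (\<Sum>i<m. \<beta> i) + (v::nat)"
proof -
  have "(\<Sum>i<m. (\<beta>(j := v)) i) = (\<beta>(j := v)) j + (\<Sum>i\<in>{..<m}-{j}. (\<beta>(j := v)) i)"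
    using j by (intro sum.remove) auto
  also have "(\<Sum>i\<in>{..<m}-{j}. (\<beta>(j := v)) i) = (\<Sum>i\<in>{..<m}-{j}. \<beta> i)"
    by (rule sum.cong) auto
  finally have "(\<Sum>i<m. (\<beta>(j := v)) i) = v + (\<Sum>i\<in>{..<m}-{j}. \<beta> i)" by simp
  moreover have "(\<Sum>i<m. \<beta> i) = \<beta> j + (\<Sum>i\<in>{..<m}-{j}. \<beta> i)"
    using j sum.remove[of "{..<m}" j \<beta>] by simp
  ultimately show ?thesis by linarith
qed

lemma reidx:
  assumes j: "j < m" and f0: "\<And>\<beta>. \<beta> j = 0 \<Longrightarrow> f \<beta> = (0::real)"
  shows "(\<Sum>\<beta>\<in>multi_idx m (Suc k). f \<beta>) = (\<Sum>\<gamma>\<in>multi_idx m k. f (\<gamma>(j := \<gamma> j + 1)))"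
proof (rule sym, rule sum.reindex_bij_witness_not_neutral[where T'="{\<beta>\<in>multi_idx m (Suc k). \<beta> j = 0}" and S'="{}"
    and i="\<lambda>\<beta>. \<beta>(j := \<beta> j - 1)" and j="\<lambda>\<gamma>. \<gamma>(j := \<gamma> j + 1)"])
  show "finite {\<beta>\<in>multi_idx m (Suc k). \<beta> j = 0}" using finite_multi_idx by simp
  show "finite {}" by simp
next
  fix a assume a: "a \<in> multi_idx m (Suc k) - {\<beta>\<in>multi_idx m (Suc k). \<beta> j = 0}"
  hence a1: "\<forall>i\<ge>m. a i = 0" "(\<Sum>i<m. a i) = Suc k" "a j \<noteq> 0" by (auto simp: multi_idx_def)
  show "a(j := a j - 1, j := (a(j := a j - 1)) j + 1) = a" using a1(3) by (simp add: fun_eq_iff)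
  have "(\<Sum>i<m. (a(j := a j - 1)) i) = k" using sum_upd_nat[OF j, of a "a j - 1"] a1 by simp
  thus "a(j := a j - 1) \<in> multi_idx m k - {}"
    using a1 j unfolding multi_idx_def by simp
next
  fix b assume b: "b \<in> multi_idx m k - {}"
  hence b1: "\<forall>i\<ge>m. b i = 0" "(\<Sum>i<m. b i) = k" by (auto simp: multi_idx_def)
  show "b(j := b j + 1, j := (b(j := b j + 1)) j - 1) = b" by (simp add: fun_eq_iff)
  have "(\<Sum>i<m. (b(j := b j + 1)) i) = Suc k" using sum_upd_nat[OF j, of b "b j + 1"] b1 by simp
  thus "b(j := b j + 1) \<in> multi_idx m (Suc k) - {\<beta>\<in>multi_idx m (Suc k). \<beta> j = 0}"
    using b1 j unfolding multi_idx_def by simp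
next
  fix a assume "a \<in> {\<beta>\<in>multi_idx m (Suc k). \<beta> j = 0}"
  thus "f a = 0" using f0 by simp
next
  fix b :: "nat \<Rightarrow> nat" assume "b \<in> {}" thus "f (b(j := b j + 1)) = 0" by simp
next
  fix a assume "a \<in> multi_idx m k"
  show "f (a(j := a j + 1)) = f (a(j := a j + 1))" by simp
qed

lemma sym_part:
  assumes "\<And>i j. T i j = T j i"
  shows "(\<Sum>i<m. \<Sum>j<m. (d i + d j) / 2 * T i j) = (\<Sum>i<m. \<Sum>j<m. d i * (T i j :: real))"
proof -
  have "(\<Sum>i<m. \<Sum>j<m. d j * T i j) = (\<Sum>j<m. \<Sum>i<m. d j * T i j)" by (rule sum.swap)
  also have "\<dots> = (\<Sum>i<m. \<Sum>j<m. d i * T i j)" using assms by simp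
  finally have e: "(\<Sum>i<m. \<Sum>j<m. d j * T i j) = (\<Sum>i<m. \<Sum>j<m. d i * T i j)" .
  have "(\<Sum>i<m. \<Sum>j<m. (d i + d j) / 2 * T i j) = ((\<Sum>i<m. \<Sum>j<m. d i * T i j) + (\<Sum>i<m. \<Sum>j<m. d j * T i j)) / 2"
    by (simp add: sum.distrib sum_divide_distrib algebra_simps add_divide_distrib)
  thus ?thesis using e by simp
qed

lemma prod_upd_real:
  fixes f :: "nat \<Rightarrow> real"
  assumes j: "j < m"
  shows "(\<Prod>k<m. (f(j := y)) k) * f j = y * (\<Prod>k<m. f k :: real)"
proof -
  have "(\<Prod>k<m. (f(j := y)) k) = (f(j := y)) j * (\<Prod>k\<in>{..<m}-{j}. (f(j := y)) k)"
    using j by (intro prod.remove) auto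
  also have "(\<Prod>k\<in>{..<m}-{j}. (f(j := y)) k) = (\<Prod>k\<in>{..<m}-{j}. f k)"
    by (rule prod.cong) auto
  finally have 1: "(\<Prod>k<m. (f(j := y)) k) = y * (\<Prod>k\<in>{..<m}-{j}. f k)" by simp
  have 2: "(\<Prod>k<m. f k) = f j * (\<Prod>k\<in>{..<m}-{j}. f k)"
    using j by (intro prod.remove) auto
  show ?thesis unfolding 1 2 by simp
qed

lemma coef_shift:
  assumes j: "j < m"
  shows "multinom m p (\<gamma>(j := \<gamma> j + 1)) * real (\<gamma> j + 1) = multinom m p \<gamma>"
proof -
  have e: "(\<lambda>k. fact ((\<gamma>(j := \<gamma> j + 1)) k) :: real) = (\<lambda>k. fact (\<gamma> k))(j := fact (\<gamma> j + 1))"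
    by (simp add: fun_eq_iff)
  have "(\<Prod>k<m. fact ((\<gamma>(j := \<gamma> j + 1)) k) :: real) * fact (\<gamma> j) = fact (\<gamma> j + 1) * (\<Prod>k<m. fact (\<gamma> k))"
    using prod_upd_real[OF j, of "\<lambda>k. fact (\<gamma> k)" "fact (\<gamma> j + 1)"] unfolding e by simp
  hence P: "(\<Prod>k<m. fact ((\<gamma>(j := \<gamma> j + 1)) k) :: real) = real (\<gamma> j + 1) * (\<Prod>k<m. fact (\<gamma> k))"
    by (simp add: fact_Suc_0 del: of_nat_Suc)
  have pos: "(\<Prod>k<m. fact (\<gamma> k) :: real) > 0" by (intro prod_pos) auto
  have aux: "r \<noteq> 0 \<Longrightarrow> Q \<noteq> 0 \<Longrightarrow> a / (r * Q) * r = a / Q" for r Q a :: real by simp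
  show ?thesis unfolding multinom_def P using pos by (intro aux) auto
qed

lemma theta_shift:
  fixes \<gamma> :: "nat \<Rightarrow> nat" and \<theta> :: "nat \<Rightarrow> real" and j m :: nat
  assumes j: "j < m"
  shows "(\<Prod>k<m. \<theta> k ^ ((\<gamma>(j := \<gamma> j + 1)) k ^ 2)) = \<theta> j ^ (2 * \<gamma> j + 1) * (\<Prod>k<m. (\<theta> k ^ (\<gamma> k ^ 2) :: real))"
proof -
  have e: "(\<lambda>k. \<theta> k ^ ((\<gamma>(j := \<gamma> j + 1)) k ^ 2)) = (\<lambda>k. \<theta> k ^ (\<gamma> k ^ 2))(j := \<theta> j ^ ((\<gamma> j + 1)^2))"
    by (simp add: fun_eq_iff)
  have 1: "(\<Prod>k<m. (f(j := y)) k) = y * (\<Prod>k\<in>{..<m}-{j}. f k)" for f :: "nat \<Rightarrow> real" and y :: real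
  proof -
    have "(\<Prod>k<m. (f(j := y)) k) = (f(j := y)) j * (\<Prod>k\<in>{..<m}-{j}. (f(j := y)) k)"
      using j by (intro prod.remove) auto
    also have "(\<Prod>k\<in>{..<m}-{j}. (f(j := y)) k) = (\<Prod>k\<in>{..<m}-{j}. f k)"
      by (rule prod.cong) auto
    finally show ?thesis by simp
  qed
  have 2: "(\<Prod>k<m. f k) = f j * (\<Prod>k\<in>{..<m}-{j}. f k :: real)" for f :: "nat \<Rightarrow> real"
    using j by (intro prod.remove) auto
  have "(\<gamma> j + 1)^2 = \<gamma> j ^ 2 + (2 * \<gamma> j + 1)" by (simp add: power2_eq_square algebra_simps)
  hence "\<theta> j ^ ((\<gamma> j + 1)^2) = \<theta> j ^ (\<gamma> j ^ 2) * \<theta> j ^ (2 * \<gamma> j + 1)" by (simp add: power_add)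
  thus ?thesis unfolding e 1 2[of "\<lambda>k. \<theta> k ^ (\<gamma> k ^ 2)"] by simp
qed

theorem lemmaA2:
  fixes m1 p :: nat and \<theta> d :: "nat \<Rightarrow> real" and u :: "nat \<Rightarrow> real^'n::finite \<Rightarrow> real"
    and x :: "real^'n"
  assumes m1: "m1 \<ge> 1"
    and theta_pos: "\<And>i. i < m1 \<Longrightarrow> \<theta> i > 0"
    and u_diff: "\<And>i y. i < m1 \<Longrightarrow> u i differentiable (at y)"
    and u_C1: "\<And>i. i < m1 \<Longrightarrow> continuous_on UNIV (\<lambda>y. frechet_derivative (u i) (at y))"
    and u_nonneg: "\<And>i y. i < m1 \<Longrightarrow> u i y \<ge> 0"
    and p: "p \<ge> 2"
  shows "(\<Sum>\<beta>\<in>multi_idx m1 (p - 1).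
            multinom m1 p \<beta> * (\<Prod>j<m1. \<theta> j ^ (\<beta> j ^ 2)) *
            (\<Sum>i<m1. \<theta> i ^ (2 * \<beta> i + 1) * d i *
               grad_dot (u i) (\<lambda>y. mpow m1 (\<lambda>j. u j y) \<beta>) x))
       = (\<Sum>\<beta>\<in>multi_idx m1 (p - 2).
            multinom m1 p \<beta> * (\<Prod>j<m1. \<theta> j ^ (\<beta> j ^ 2)) *
            mpow m1 (\<lambda>j. u j x) \<beta> *
            (\<Sum>l\<in>UNIV. \<Sum>i<m1. \<Sum>j<m1.
               amat \<theta> d \<beta> i j * pderiv_at l (u i) x * pderiv_at l (u j) x))"
proof -
  define U where "U = (\<lambda>j. u j x)"
  define G where "G = (\<lambda>i j. \<Sum>l\<in>UNIV. pderiv_at l (u i) x * pderiv_at l (u j) x)"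
  define c where "c = (\<lambda>\<beta>. multinom m1 p \<beta> * (\<Prod>j<m1. \<theta> j ^ (\<beta> j ^ 2)))"
  define W where "W = (\<lambda>\<gamma> i j. (if i = j then \<theta> i ^ 2 else 1) * \<theta> i ^ (2 * \<gamma> i + 1) * \<theta> j ^ (2 * \<gamma> j + 1) * G i j)"
  define M1 where "M1 = multi_idx m1 (p - 1)"
  define M2 where "M2 = multi_idx m1 (p - 2)"
  have diff: "\<And>i. i < m1 \<Longrightarrow> u i differentiable (at x)" using u_diff by blast
  have Gsym: "G i j = G j i" for i j by (simp add: G_def mult.commute)
  have Wsym: "W \<gamma> i j = W \<gamma> j i" for \<gamma> i j by (simp add: W_def Gsym mult_ac)
  have gd: "grad_dot (u i) (\<lambda>y. mpow m1 (\<lambda>j. u j y) \<beta>) x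
      = (\<Sum>j<m1. real (\<beta> j) * mpow m1 U (\<beta>(j := \<beta> j - 1)) * G i j)" for i \<beta>
  proof -
    have "grad_dot (u i) (\<lambda>y. mpow m1 (\<lambda>j. u j y) \<beta>) x
       = (\<Sum>l\<in>UNIV. pderiv_at l (u i) x * (\<Sum>j<m1. real (\<beta> j) * mpow m1 U (\<beta>(j := \<beta> j - 1)) * pderiv_at l (u j) x))"
      unfolding grad_dot_def U_def by (intro sum.cong refl arg_cong[where f="\<lambda>z. _ * z"] deriv_mpow diff)
    also have "\<dots> = (\<Sum>l\<in>UNIV. \<Sum>j<m1. real (\<beta> j) * mpow m1 U (\<beta>(j := \<beta> j - 1)) * (pderiv_at l (u i) x * pderiv_at l (u j) x))"
      by (simp add: sum_distrib_left mult_ac)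
    also have "\<dots> = (\<Sum>j<m1. \<Sum>l\<in>UNIV. real (\<beta> j) * mpow m1 U (\<beta>(j := \<beta> j - 1)) * (pderiv_at l (u i) x * pderiv_at l (u j) x))"
      by (rule sum.swap)
    also have "\<dots> = (\<Sum>j<m1. real (\<beta> j) * mpow m1 U (\<beta>(j := \<beta> j - 1)) * G i j)"
      by (simp add: G_def sum_distrib_left)
    finally show ?thesis .
  qed
  define F where "F = (\<lambda>j \<beta>. real (\<beta> j) * mpow m1 U (\<beta>(j := \<beta> j - 1)) *
      (\<Sum>i<m1. c \<beta> * \<theta> i ^ (2 * \<beta> i + 1) * d i * G i j))"
  have "(\<Sum>\<beta>\<in>multi_idx m1 (p - 1).
            multinom m1 p \<beta> * (\<Prod>j<m1. \<theta> j ^ (\<beta> j ^ 2)) *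
            (\<Sum>i<m1. \<theta> i ^ (2 * \<beta> i + 1) * d i *
               grad_dot (u i) (\<lambda>y. mpow m1 (\<lambda>j. u j y) \<beta>) x))
      = (\<Sum>\<beta>\<in>M1. \<Sum>j<m1. F j \<beta>)"
    unfolding M1_def
  proof (rule sum.cong[OF refl])
    fix \<beta>
    have "multinom m1 p \<beta> * (\<Prod>j<m1. \<theta> j ^ (\<beta> j ^ 2)) *
            (\<Sum>i<m1. \<theta> i ^ (2 * \<beta> i + 1) * d i * grad_dot (u i) (\<lambda>y. mpow m1 (\<lambda>j. u j y) \<beta>) x)
       = (\<Sum>i<m1. \<Sum>j<m1. c \<beta> * \<theta> i ^ (2 * \<beta> i + 1) * d i * (real (\<beta> j) * mpow m1 U (\<beta>(j := \<beta> j - 1)) * G i j))"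
      unfolding gd c_def by (simp add: sum_distrib_left mult_ac)
    also have "\<dots> = (\<Sum>j<m1. \<Sum>i<m1. c \<beta> * \<theta> i ^ (2 * \<beta> i + 1) * d i * (real (\<beta> j) * mpow m1 U (\<beta>(j := \<beta> j - 1)) * G i j))"
      by (rule sum.swap)
    also have "\<dots> = (\<Sum>j<m1. F j \<beta>)"
      unfolding F_def by (simp add: sum_distrib_left mult_ac)
    finally show "multinom m1 p \<beta> * (\<Prod>j<m1. \<theta> j ^ (\<beta> j ^ 2)) *
            (\<Sum>i<m1. \<theta> i ^ (2 * \<beta> i + 1) * d i * grad_dot (u i) (\<lambda>y. mpow m1 (\<lambda>j. u j y) \<beta>) x)
       = (\<Sum>j<m1. F j \<beta>)" .
  qed
  also have "\<dots> = (\<Sum>j<m1. \<Sum>\<beta>\<in>M1. F j \<beta>)" by (rule sum.swap)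
  also have "\<dots> = (\<Sum>j<m1. \<Sum>\<gamma>\<in>M2. F j (\<gamma>(j := \<gamma> j + 1)))"
  proof (rule sum.cong[OF refl])
    fix j assume j: "j \<in> {..<m1}"
    have pp: "p - 1 = Suc (p - 2)" using p by simp
    show "(\<Sum>\<beta>\<in>M1. F j \<beta>) = (\<Sum>\<gamma>\<in>M2. F j (\<gamma>(j := \<gamma> j + 1)))"
      unfolding M1_def M2_def pp using j by (intro reidx) (auto simp: F_def)
  qed
  also have "\<dots> = (\<Sum>j<m1. \<Sum>\<gamma>\<in>M2. c \<gamma> * mpow m1 U \<gamma> * (\<Sum>i<m1. d i * W \<gamma> i j))"
  proof (intro sum.cong refl)
    fix j and \<gamma> :: "nat \<Rightarrow> nat" assume j: "j \<in> {..<m1}"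
    have e1: "(\<gamma>(j := \<gamma> j + 1))(j := (\<gamma>(j := \<gamma> j + 1)) j - 1) = \<gamma>" by (simp add: fun_eq_iff)
    have cc: "c (\<gamma>(j := \<gamma> j + 1)) * real (\<gamma> j + 1) = c \<gamma> * \<theta> j ^ (2 * \<gamma> j + 1)"
      unfolding c_def theta_shift[OF j[simplified]]
      using coef_shift[OF j[simplified], of p \<gamma>] by (simp add: mult_ac)
    have tt: "\<theta> i ^ (2 * (\<gamma>(j := \<gamma> j + 1)) i + 1) = (if i = j then \<theta> i ^ 2 else 1) * \<theta> i ^ (2 * \<gamma> i + 1)" for i
      by (simp add: power_add[symmetric])
    have "F j (\<gamma>(j := \<gamma> j + 1)) = mpow m1 U \<gamma> * (\<Sum>i<m1. (c (\<gamma>(j := \<gamma> j + 1)) * real (\<gamma> j + 1)) *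
        \<theta> i ^ (2 * (\<gamma>(j := \<gamma> j + 1)) i + 1) * d i * G i j)"
    proof -
      have e2: "(\<gamma>(j := Suc (\<gamma> j))) j = Suc (\<gamma> j)" by simp
      show ?thesis unfolding F_def e1 by (simp add: e2 sum_distrib_left mult_ac del: of_nat_Suc of_nat_add fun_upd_apply)
    qed
    also have "\<dots> = c \<gamma> * mpow m1 U \<gamma> * (\<Sum>i<m1. d i * W \<gamma> i j)"
      unfolding cc tt W_def by (simp add: sum_distrib_left mult_ac)
    finally show "F j (\<gamma>(j := \<gamma> j + 1)) = c \<gamma> * mpow m1 U \<gamma> * (\<Sum>i<m1. d i * W \<gamma> i j)" .
  qed
  also have "\<dots> = (\<Sum>\<gamma>\<in>M2. \<Sum>j<m1. c \<gamma> * mpow m1 U \<gamma> * (\<Sum>i<m1. d i * W \<gamma> i j))" by (rule sum.swap)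
  also have "\<dots> = (\<Sum>\<gamma>\<in>M2. c \<gamma> * mpow m1 U \<gamma> * (\<Sum>j<m1. \<Sum>i<m1. d i * W \<gamma> i j))"
    by (simp add: sum_distrib_left)
  also have "\<dots> = (\<Sum>\<gamma>\<in>M2. c \<gamma> * mpow m1 U \<gamma> * (\<Sum>i<m1. \<Sum>j<m1. (d i + d j) / 2 * W \<gamma> i j))"
  proof (rule sum.cong[OF refl])
    fix \<gamma>
    have "(\<Sum>j<m1. \<Sum>i<m1. d i * W \<gamma> i j) = (\<Sum>i<m1. \<Sum>j<m1. (d i + d j) / 2 * W \<gamma> i j)"
      using sym_part[where T="W \<gamma>" and m=m1 and d=d, OF Wsym] sum.swap[of "\<lambda>j i. d i * W \<gamma> i j" "{..<m1}" "{..<m1}"] by simp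
    thus "c \<gamma> * mpow m1 U \<gamma> * (\<Sum>j<m1. \<Sum>i<m1. d i * W \<gamma> i j) = c \<gamma> * mpow m1 U \<gamma> * (\<Sum>i<m1. \<Sum>j<m1. (d i + d j) / 2 * W \<gamma> i j)" by simp
  qed
  also have "\<dots> = (\<Sum>\<beta>\<in>multi_idx m1 (p - 2).
            multinom m1 p \<beta> * (\<Prod>j<m1. \<theta> j ^ (\<beta> j ^ 2)) *
            mpow m1 (\<lambda>j. u j x) \<beta> *
            (\<Sum>l\<in>UNIV. \<Sum>i<m1. \<Sum>j<m1.
               amat \<theta> d \<beta> i j * pderiv_at l (u i) x * pderiv_at l (u j) x))"
    unfolding M2_def
  proof (intro sum.cong refl)
    fix \<gamma>
    have aw: "amat \<theta> d \<gamma> i j * G i j = (d i + d j) / 2 * W \<gamma> i j" for i j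
    proof (cases "i = j")
      case True
      have ee: "4 * \<gamma> i + 4 = 2 + (2 * \<gamma> i + 1) + (2 * \<gamma> i + 1)" by simp
      have "\<theta> i ^ (4 * \<gamma> i + 4) = \<theta> i ^ 2 * \<theta> i ^ (2 * \<gamma> i + 1) * \<theta> i ^ (2 * \<gamma> i + 1)"
        by (simp only: ee power_add)
      thus ?thesis using True by (simp add: amat_def W_def)
    next
      case False thus ?thesis by (simp add: amat_def W_def)
    qed
    have "(\<Sum>l\<in>UNIV. \<Sum>i<m1. \<Sum>j<m1. amat \<theta> d \<gamma> i j * pderiv_at l (u i) x * pderiv_at l (u j) x)
       = (\<Sum>i<m1. \<Sum>l\<in>UNIV. \<Sum>j<m1. amat \<theta> d \<gamma> i j * pderiv_at l (u i) x * pderiv_at l (u j) x)"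
      by (rule sum.swap)
    also have "\<dots> = (\<Sum>i<m1. \<Sum>j<m1. \<Sum>l\<in>UNIV. amat \<theta> d \<gamma> i j * pderiv_at l (u i) x * pderiv_at l (u j) x)"
      by (intro sum.cong refl sum.swap)
    also have "\<dots> = (\<Sum>i<m1. \<Sum>j<m1. amat \<theta> d \<gamma> i j * G i j)"
      by (simp add: G_def sum_distrib_left mult_ac)
    also have "\<dots> = (\<Sum>i<m1. \<Sum>j<m1. (d i + d j) / 2 * W \<gamma> i j)" by (simp add: aw)
    finally show "c \<gamma> * mpow m1 U \<gamma> * (\<Sum>i<m1. \<Sum>j<m1. (d i + d j) / 2 * W \<gamma> i j) =
         multinom m1 p \<gamma> * (\<Prod>j<m1. \<theta> j ^ (\<gamma> j ^ 2)) * mpow m1 (\<lambda>j. u j x) \<gamma> *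
         (\<Sum>l\<in>UNIV. \<Sum>i<m1. \<Sum>j<m1. amat \<theta> d \<gamma> i j * pderiv_at l (u i) x * pderiv_at l (u j) x)"
      by (simp add: c_def U_def)
  qed
  finally show ?thesis .
qed

end
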